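(* Let $d\ge2$, $A\in\mathcal C^{d-1}$ and $C_1,C_2\in\mathcal C^d_A$. Then $$D_{A,1}(C_1,C_2)=\int_{\mathbb I}\big\|Q^\tau_{C_1}-Q^\tau_{C_2}\big\|_{A,1}\,\mathrm d\lambda(\tau)\le\tfrac12,$$ and the bound $\tfrac12$ is attained for some $C_1,C_2\in\mathcal C^d_A$.
   Context: $\mathbb I=[0,1]$, $\lambda$ Lebesgue measure. A $d$-copula $C\in\mathcal C^d$ is the distribution function on $\mathbb I^d$ of a probability measure $\mu_C$ with uniform univariate marginals; points are $(\mathbf x,y)$, $\mathbf x\in\mathbb I^{d-1}$. $C_{1:(d-1)}$ is the marginal copula of the first $d-1$ coordinates; $\mathcal C^d_A=\{C\in\mathcal C^d:C_{1:(d-1)}=A\}$ (for $d=2$, $\mu_A=\lambda$, $\mathcal C^2_A=\mathcal C^2$). $K_C$ is the Markov kernel of $C$ w.r.t. the first $d-1$ coordinates: $\mu_C(B\times F)=\int_B K_C(\mathbf x,F)\,\mathrm d\mu_{A}(\mathbf x)$ for $C\in\mathcal C^d_A$. $Q^\tau_C(\mathbf x)=\inf\{y\in\mathbb I: K_C(\mathbf x,[0,y])\ge\tau\}$. $\|f\|_{A,1}=\int|f|\,\mathrm d\mu_A$. $D_{A,1}(C_1,C_2)=\int_{\mathbb I}\int_{\mathbb I^{d-1}}|K_{C_1}(\mathbf x,[0,y])-K_{C_2}(\mathbf x,[0,y])|\,\mathrm d\mu_A(\mathbf x)\,\mathrm d\lambda(y)$. *)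

theory Defs
  imports "HOL-Probability.Probability"
begin

text \<open>Points of I^n are represented as (extensional) functions nat => real on
  the index set {..<n}; the ambient measurable space is the product space below.\<close>

definition cube_space :: "nat \<Rightarrow> (nat \<Rightarrow> real) measure" where
  "cube_space n = PiM {..<n} (\<lambda>_. borel)"

definition unif01 :: "real measure" where
  "unif01 = uniform_measure lborel {0..1}"

text \<open>An n-copula, represented by its probability measure mu_C on I^n
  (all univariate marginals uniform on I).\<close>
definition copula_measure :: "nat \<Rightarrow> (nat \<Rightarrow> real) measure \<Rightarrow> bool" where
  "copula_measure n \<mu> \<longleftrightarrow>
     sets \<mu> = sets (cube_space n) \<and> prob_space \<mu> \<and>
     (\<forall>i<n. distr \<mu> borel (\<lambda>x. x i) = unif01)"

text \<open>A d-copula in split coordinates (x,y), x in I^(d-1), y in I, whose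
  marginal copula of the first d-1 coordinates has measure mu_A, i.e. C in C^d_A.\<close>
definition copula_with_marginal ::
  "nat \<Rightarrow> (nat \<Rightarrow> real) measure \<Rightarrow> ((nat \<Rightarrow> real) \<times> real) measure \<Rightarrow> bool" where
  "copula_with_marginal d \<mu>A \<mu> \<longleftrightarrow>
     sets \<mu> = sets (cube_space (d - 1) \<Otimes>\<^sub>M borel) \<and> prob_space \<mu> \<and>
     (\<forall>i<d - 1. distr \<mu> borel (\<lambda>(x, y). x i) = unif01) \<and>
     distr \<mu> borel snd = unif01 \<and>
     distr \<mu> (cube_space (d - 1)) fst = \<mu>A"

definition markov_kernel_of ::
  "nat \<Rightarrow> (nat \<Rightarrow> real) measure \<Rightarrow> ((nat \<Rightarrow> real) \<times> real) measure
     \<Rightarrow> ((nat \<Rightarrow> real) \<Rightarrow> real measure) \<Rightarrow> bool" where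
  "markov_kernel_of d \<mu>A \<mu> K \<longleftrightarrow>
     K \<in> cube_space (d - 1) \<rightarrow>\<^sub>M prob_algebra borel \<and>
     (\<forall>x\<in>space (cube_space (d - 1)). emeasure (K x) {0..1} = 1) \<and>
     (\<forall>B\<in>sets (cube_space (d - 1)). \<forall>F\<in>sets borel.
        emeasure \<mu> (B \<times> F) = (\<integral>\<^sup>+ x. indicator B x * emeasure (K x) F \<partial>\<mu>A))"

definition cond_quantile :: "((nat \<Rightarrow> real) \<Rightarrow> real measure) \<Rightarrow> real \<Rightarrow> (nat \<Rightarrow> real) \<Rightarrow> real" where
  "cond_quantile K \<tau> x = Inf {y \<in> {0..1}. \<tau> \<le> measure (K x) {0..y}}"

definition D_A1 ::
  "(nat \<Rightarrow> real) measure \<Rightarrow> ((nat \<Rightarrow> real) \<Rightarrow> real measure) \<Rightarrow> ((nat \<Rightarrow> real) \<Rightarrow> real measure) \<Rightarrow> real" where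
  "D_A1 \<mu>A K1 K2 = (\<integral>y. (\<integral>x. \<bar>measure (K1 x) {0..y} - measure (K2 x) {0..y}\<bar> \<partial>\<mu>A)
                      \<partial>(restrict_space lborel {0..1}))"

definition norm_A1 :: "(nat \<Rightarrow> real) measure \<Rightarrow> ((nat \<Rightarrow> real) \<Rightarrow> real) \<Rightarrow> real" where
  "norm_A1 \<mu>A f = (\<integral>x. \<bar>f x\<bar> \<partial>\<mu>A)"

end

theory Submission
  imports Defs
begin


definition dfun :: "real measure \<Rightarrow> real \<Rightarrow> real" where
  "dfun P y = measure P {0..y}"

definition qfun :: "real measure \<Rightarrow> real \<Rightarrow> real" where
  "qfun P \<tau> = Inf {y \<in> {0..1}. \<tau> \<le> dfun P y}"

locale dP = prob_space P for P :: "real measure" +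
  assumes sets_P: "sets P = sets borel"
    and one: "emeasure P {0..1} = 1"
begin

lemma meas[measurable]: "A \<in> sets borel \<Longrightarrow> A \<in> sets P"
  using sets_P by simp

lemma dfun_nonneg: "0 \<le> dfun P y" by (simp add: dfun_def)

lemma dfun_le1: "dfun P y \<le> 1"
  unfolding dfun_def by simp

lemma dfun_mono: "y \<le> z \<Longrightarrow> dfun P y \<le> dfun P z"
  unfolding dfun_def
  by (intro finite_measure_mono) auto

lemma dfun_one: "1 \<le> y \<Longrightarrow> dfun P y = 1"
proof -
  assume "1 \<le> y"
  have "measure P {0..1} = 1" using one by (simp add: measure_def)
  then have "1 \<le> dfun P y" using dfun_mono[OF \<open>1 \<le> y\<close>] by (simp add: dfun_def)
  then show ?thesis using dfun_le1[of y] by simp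
qed

lemma dfun_neg: "y < 0 \<Longrightarrow> dfun P y = 0"
  by (simp add: dfun_def)

lemma mono_dfun: "mono (dfun P)"
  by (simp add: dfun_mono monoI)

lemma dfun_meas[measurable]: "dfun P \<in> borel_measurable borel"
  by (rule borel_measurable_mono[OF mono_dfun])

lemma dfun_rcont: "(\<lambda>n. dfun P (q + 1 / (Suc n))) \<longlonglongrightarrow> dfun P q"
proof -
  have "(\<lambda>n. measure P ({0..q + 1 / Suc n})) \<longlonglongrightarrow> measure P (\<Inter>n. {0..q + 1 / Suc n})"
    apply (intro finite_Lim_measure_decseq)
     apply auto[1]
    apply (rule decseq_SucI)
    apply (auto simp: frac_le)
    done
  moreover have "(\<Inter>n. {0..q + 1 / real (Suc n)}) = {0..q}"
  proof (intro equalityI subsetI)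
    fix z assume z: "z \<in> (\<Inter>n. {0..q + 1 / real (Suc n)})"
    have "z \<le> q"
    proof (rule ccontr)
      assume "\<not> z \<le> q"
      then obtain n where "1 / real (Suc n) < z - q"
        using reals_Archimedean[of "z - q"] by (auto simp: field_simps inverse_eq_divide)
      moreover have "z \<le> q + 1 / real (Suc n)" using z by auto
      ultimately show False by linarith
    qed
    then show "z \<in> {0..q}" using z by auto
  next
    fix z assume "z \<in> {0..q}"
    moreover have "0 \<le> 1 / real (Suc n)" for n by simp
    ultimately show "z \<in> (\<Inter>n. {0..q + 1 / real (Suc n)})" by (auto intro: add_increasing2)
  qed
  ultimately show ?thesis by (simp add: dfun_def)
qed

lemma qfun_props:
  assumes t: "0 < \<tau>" "\<tau> \<le> 1"
  shows "0 \<le> qfun P \<tau>" "qfun P \<tau> \<le> 1" "\<tau> \<le> dfun P (qfun P \<tau>)"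
proof -
  let ?S = "{y \<in> {0..1}. \<tau> \<le> dfun P y}"
  have one_in: "1 \<in> ?S" using t dfun_one[of 1] by auto
  have bdd: "bdd_below ?S" by (rule bdd_belowI[of _ 0]) auto
  show q0: "0 \<le> qfun P \<tau>" unfolding qfun_def
    by (rule cInf_greatest) (use one_in in auto)
  show "qfun P \<tau> \<le> 1" unfolding qfun_def by (rule cInf_lower[OF one_in bdd])
  have "\<tau> \<le> dfun P (qfun P \<tau> + 1 / Suc n)" for n
  proof -
    have "Inf ?S < qfun P \<tau> + 1 / Suc n" unfolding qfun_def by simp
    then obtain s where s: "s \<in> ?S" "s < qfun P \<tau> + 1 / Suc n"
      using cInf_less_iff[of ?S] one_in bdd by blast
    then have "\<tau> \<le> dfun P s" by auto
    also have "\<dots> \<le> dfun P (qfun P \<tau> + 1 / Suc n)" using s by (intro dfun_mono) auto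
    finally show ?thesis .
  qed
  then show "\<tau> \<le> dfun P (qfun P \<tau>)"
    using dfun_rcont[of "qfun P \<tau>"] by (intro LIMSEQ_le_const) auto
qed

lemma qfun_galois:
  assumes t: "0 < \<tau>" "\<tau> \<le> 1" and y: "0 \<le> y" "y \<le> 1"
  shows "qfun P \<tau> \<le> y \<longleftrightarrow> \<tau> \<le> dfun P y"
proof
  assume "qfun P \<tau> \<le> y"
  then show "\<tau> \<le> dfun P y"
    using qfun_props(3)[OF t] dfun_mono by (meson order_trans)
next
  assume "\<tau> \<le> dfun P y"
  then show "qfun P \<tau> \<le> y" unfolding qfun_def
    by (intro cInf_lower) (auto simp: y intro!: bdd_belowI[of _ 0])
qed

lemma qfun_zero: "qfun P 0 = 0"
proof -
  have "{y \<in> {0..1}. 0 \<le> dfun P y} = {0..1::real}" by (auto simp: dfun_nonneg)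
  then show ?thesis by (simp add: qfun_def)
qed

end


abbreviation LL :: "real measure" where "LL \<equiv> restrict_space lborel {0..1}"

lemma space_LL[simp]: "space LL = {0..1}"
  by (simp add: space_restrict_space)

lemma emeasure_LL: "A \<subseteq> {0..1} \<Longrightarrow> A \<in> sets borel \<Longrightarrow> emeasure LL A = emeasure lborel A"
  by (subst emeasure_restrict_space) auto

lemma measure_LL: "A \<subseteq> {0..1} \<Longrightarrow> A \<in> sets borel \<Longrightarrow> measure LL A = measure lborel A"
  by (simp add: measure_def emeasure_LL)

lemma prob_LL: "prob_space LL"
  by (rule prob_spaceI) (simp add: emeasure_LL)

lemma sets_LL_iff: "A \<in> sets LL \<longleftrightarrow> (\<exists>B\<in>sets borel. A = B \<inter> {0..1})"
  by (simp add: sets_restrict_space_iff) (auto)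

lemma int_ind_Ioc:
  assumes "0 \<le> a" "a \<le> b" "b \<le> 1"
  shows "(\<integral>t. indicator {a<..b} t \<partial>LL) = b - (a::real)"
proof -
  have sub: "{a<..b} \<subseteq> {0..1}" using assms by auto
  have ms: "{a<..b} \<in> sets LL" using sub by (auto simp: sets_LL_iff intro!: bexI[of _ "{a<..b}"])
  have "(\<integral>t. indicator {a<..b} t \<partial>LL) = measure LL {a<..b}"
    using sub by (simp add: Int_absorb2)
  also have "\<dots> = b - a" using sub assms by (simp add: measure_LL)
  finally show ?thesis .
qed

lemma int_ind_Ico:
  assumes "0 \<le> a" "a \<le> b" "b \<le> 1"
  shows "(\<integral>t. indicator {a..<b} t \<partial>LL) = b - (a::real)"
proof -
  have sub: "{a..<b} \<subseteq> {0..1}" using assms by auto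
  have ms: "{a..<b} \<in> sets LL" using sub by (auto simp: sets_LL_iff intro!: bexI[of _ "{a..<b}"])
  have "(\<integral>t. indicator {a..<b} t \<partial>LL) = measure LL {a..<b}"
    using sub by (simp add: Int_absorb2)
  also have "\<dots> = b - a" using sub assms by (simp add: measure_LL)
  finally show ?thesis .
qed


lemma LL_id_meas[measurable]: "(\<lambda>x. x) \<in> borel_measurable LL"
  by (rule measurable_restrict_space1) (simp add: measurable_lborel1)

lemma dfun_meas_LL[measurable]: "dP P \<Longrightarrow> dfun P \<in> borel_measurable LL"
  by (intro measurable_restrict_space1) (simp add: measurable_lborel1 dP.dfun_meas)

lemma pointwise:
  assumes P1: "dP P1" and P2: "dP P2"
  shows "(\<integral>y. \<bar>dfun P1 y - dfun P2 y\<bar> \<partial>LL) = (\<integral>\<tau>. \<bar>qfun P1 \<tau> - qfun P2 \<tau>\<bar> \<partial>LL)"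
proof -
  interpret p1: dP P1 by (rule P1)
  interpret p2: dP P2 by (rule P2)
  interpret LLp: pair_prob_space LL LL
    by (simp add: pair_prob_space_def pair_sigma_finite_def prob_LL prob_space_imp_sigma_finite)
  define h where "h y \<tau> = (if 0 < \<tau> \<and> ((\<tau> \<le> dfun P1 y \<and> \<not> \<tau> \<le> dfun P2 y) \<or> (\<tau> \<le> dfun P2 y \<and> \<not> \<tau> \<le> dfun P1 y)) then 1 else (0::real))"
    for y \<tau>
  have F1[measurable]: "dfun P1 \<in> borel_measurable LL" using P1 by measurable
  have F2[measurable]: "dfun P2 \<in> borel_measurable LL" using P2 by measurable
  have [measurable]: "(\<lambda>p. snd p) \<in> borel_measurable (LL \<Otimes>\<^sub>M LL)"
    by (rule measurable_compose[OF measurable_snd LL_id_meas])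
  have [measurable]: "(\<lambda>p. dfun P1 (fst p)) \<in> borel_measurable (LL \<Otimes>\<^sub>M LL)"
    by (rule measurable_compose[OF measurable_fst]) simp
  have [measurable]: "(\<lambda>p. dfun P2 (fst p)) \<in> borel_measurable (LL \<Otimes>\<^sub>M LL)"
    by (rule measurable_compose[OF measurable_fst]) simp
  have meas: "(\<lambda>(y,\<tau>). h y \<tau>) \<in> borel_measurable (LL \<Otimes>\<^sub>M LL)"
  proof -
    have "(\<lambda>(y,\<tau>). h y \<tau>) = (\<lambda>p. if 0 < snd p \<and> ((snd p \<le> dfun P1 (fst p) \<and> \<not> snd p \<le> dfun P2 (fst p)) \<or> (snd p \<le> dfun P2 (fst p) \<and> \<not> snd p \<le> dfun P1 (fst p))) then 1 else (0::real))"
      by (auto simp: h_def fun_eq_iff)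
    also have "\<dots> \<in> borel_measurable (LL \<Otimes>\<^sub>M LL)" by measurable
    finally show ?thesis .
  qed
  have int: "integrable (LL \<Otimes>\<^sub>M LL) (\<lambda>(y,\<tau>). h y \<tau>)"
    apply (rule LLp.P.integrable_const_bound[where B=1])
     apply (rule AE_I2)
     apply (auto simp: h_def split: prod.splits)[1]
    apply (rule meas)
    done
  have fub: "(\<integral>\<tau>. (\<integral>y. h y \<tau> \<partial>LL) \<partial>LL) = (\<integral>y. (\<integral>\<tau>. h y \<tau> \<partial>LL) \<partial>LL)"
    by (rule LLp.Fubini_integral[OF int])
  have in1: "(\<integral>\<tau>. h y \<tau> \<partial>LL) = \<bar>dfun P1 y - dfun P2 y\<bar>" for y
  proof -
    let ?a = "min (dfun P1 y) (dfun P2 y)" and ?b = "max (dfun P1 y) (dfun P2 y)"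
    have "h y \<tau> = indicator {?a<..?b} \<tau>" for \<tau>
      using p1.dfun_nonneg[of y] p2.dfun_nonneg[of y]
      by (auto simp: h_def indicator_def)
    then have "(\<integral>\<tau>. h y \<tau> \<partial>LL) = (\<integral>\<tau>. indicator {?a<..?b} \<tau> \<partial>LL)" by simp
    also have "\<dots> = ?b - ?a"
      using p1.dfun_nonneg[of y] p2.dfun_nonneg[of y] p1.dfun_le1[of y] p2.dfun_le1[of y]
      by (intro int_ind_Ioc) auto
    finally show ?thesis by auto
  qed
  have in2: "(\<integral>y. h y \<tau> \<partial>LL) = \<bar>qfun P1 \<tau> - qfun P2 \<tau>\<bar>" if t: "\<tau> \<in> {0..1}" for \<tau>
  proof (cases "\<tau> = 0")
    case True
    then show ?thesis by (simp add: h_def p1.qfun_zero p2.qfun_zero)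
  next
    case False
    then have t': "0 < \<tau>" "\<tau> \<le> 1" using t by auto
    let ?a = "min (qfun P1 \<tau>) (qfun P2 \<tau>)" and ?b = "max (qfun P1 \<tau>) (qfun P2 \<tau>)"
    have hy: "h y \<tau> = indicator {?a..<?b} y" if y: "y \<in> space LL" for y
      using y t' p1.qfun_galois[OF t', of y] p2.qfun_galois[OF t', of y]
      by (auto simp: h_def indicator_def)
    have "(\<integral>y. h y \<tau> \<partial>LL) = (\<integral>y. indicator {?a..<?b} y \<partial>LL)"
      by (rule Bochner_Integration.integral_cong[OF refl]) (simp add: hy)
    also have "\<dots> = ?b - ?a"
      using p1.qfun_props[OF t'] p2.qfun_props[OF t']
      by (intro int_ind_Ico) auto
    finally show ?thesis by auto
  qed
  have "(\<integral>y. \<bar>dfun P1 y - dfun P2 y\<bar> \<partial>LL) = (\<integral>y. (\<integral>\<tau>. h y \<tau> \<partial>LL) \<partial>LL)"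
    by (simp add: in1)
  also have "\<dots> = (\<integral>\<tau>. (\<integral>y. h y \<tau> \<partial>LL) \<partial>LL)" by (rule fub[symmetric])
  also have "\<dots> = (\<integral>\<tau>. \<bar>qfun P1 \<tau> - qfun P2 \<tau>\<bar> \<partial>LL)"
    by (intro Bochner_Integration.integral_cong) (auto simp: in2)
  finally show ?thesis .
qed


lemma kernel_dP:
  assumes "markov_kernel_of d \<mu>A \<mu> K" "x \<in> space (cube_space (d - 1))"
  shows "dP (K x)"
proof -
  have "K x \<in> space (prob_algebra borel)"
    using assms unfolding markov_kernel_of_def by (auto intro: measurable_space)
  then have "prob_space (K x)" "sets (K x) = sets borel" by (auto simp: space_prob_algebra)
  moreover have "emeasure (K x) {0..1} = 1" using assms unfolding markov_kernel_of_def by auto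
  ultimately show ?thesis by (simp add: dP_def dP_axioms_def)
qed

lemma cq_eq: "cond_quantile K \<tau> x = qfun (K x) \<tau>"
  by (simp add: cond_quantile_def qfun_def dfun_def)

lemma qfun_range: "dP P \<Longrightarrow> \<tau> \<in> {0..1} \<Longrightarrow> qfun P \<tau> \<in> {0..1}"
  by (cases "\<tau> = 0") (auto simp: dP.qfun_zero dP.qfun_props)

lemma kernel_meas_sub:
  "markov_kernel_of d \<mu>A \<mu> K \<Longrightarrow> K \<in> cube_space (d - 1) \<rightarrow>\<^sub>M subprob_algebra borel"
  unfolding markov_kernel_of_def by (auto intro: measurable_prob_algebraD)

lemma kernel_joint_meas:
  assumes "markov_kernel_of d \<mu>A \<mu> K"
  shows "(\<lambda>p. measure (K (fst p)) {0..snd p}) \<in> borel_measurable (cube_space (d - 1) \<Otimes>\<^sub>M (borel::real measure))"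
proof -
  let ?C = "cube_space (d - 1)"
  have KL: "(\<lambda>p. K (fst p)) \<in> ?C \<Otimes>\<^sub>M borel \<rightarrow>\<^sub>M prob_algebra borel"
    using assms unfolding markov_kernel_of_def by (intro measurable_compose[OF measurable_fst]) auto
  have "Sigma (space (?C \<Otimes>\<^sub>M (borel::real measure))) (\<lambda>p. {0..snd p}) = {q \<in> space ((?C \<Otimes>\<^sub>M (borel::real measure)) \<Otimes>\<^sub>M (borel::real measure)). 0 \<le> snd q \<and> snd q \<le> snd (fst q)}"
    by (auto simp: space_pair_measure)
  also have "\<dots> \<in> sets ((?C \<Otimes>\<^sub>M (borel::real measure)) \<Otimes>\<^sub>M (borel::real measure))"
  proof -
    have [measurable]: "(\<lambda>q. snd (fst q)) \<in> borel_measurable ((?C \<Otimes>\<^sub>M (borel::real measure)) \<Otimes>\<^sub>M (borel::real measure))"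
      by (rule measurable_compose[OF measurable_fst measurable_snd])
    have [measurable]: "(\<lambda>q. snd q) \<in> borel_measurable ((?C \<Otimes>\<^sub>M (borel::real measure)) \<Otimes>\<^sub>M (borel::real measure))"
      by (rule measurable_snd)
    let ?S = "space ((?C \<Otimes>\<^sub>M (borel::real measure)) \<Otimes>\<^sub>M (borel::real measure))"
    have "{q \<in> ?S. 0 \<le> snd q \<and> snd q \<le> snd (fst q)} = {q \<in> ?S. (\<lambda>q. 0::real) q \<le> snd q} \<inter> {q \<in> ?S. snd q \<le> snd (fst q)}"
      by auto
    also have "\<dots> \<in> sets ((?C \<Otimes>\<^sub>M (borel::real measure)) \<Otimes>\<^sub>M (borel::real measure))"
      by (intro sets.Int borel_measurable_le) auto
    finally show ?thesis .
  qed
  finally show ?thesis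
    by (rule measure_measurable_prob_algebra2[OF _ KL])
qed

lemma kernel_slice_meas:
  assumes "markov_kernel_of d \<mu>A \<mu> K"
  shows "(\<lambda>x. measure (K x) {0..a}) \<in> borel_measurable (cube_space (d - 1))"
  using measurable_compose[OF kernel_meas_sub[OF assms] measurable_measure_subprob_algebra[of "{0..a}" borel]]
  by simp


lemma copula_basics_aux: "sets M = sets N \<Longrightarrow> space M = space N"
  by (rule sets_eq_imp_space_eq)

lemma copula_basics:
  assumes "copula_measure n \<mu>A"
  shows "sets \<mu>A = sets (cube_space n)" "space \<mu>A = space (cube_space n)" "prob_space \<mu>A"
proof -
  show s: "sets \<mu>A = sets (cube_space n)" using assms by (simp add: copula_measure_def)
  show "space \<mu>A = space (cube_space n)" by (rule copula_basics_aux[OF s])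
  show "prob_space \<mu>A" using assms by (simp add: copula_measure_def)
qed

lemma pair_meas_transfer:
  assumes "sets \<mu>A = sets C" "f \<in> borel_measurable (C \<Otimes>\<^sub>M (borel::real measure))"
  shows "f \<in> borel_measurable (\<mu>A \<Otimes>\<^sub>M LL)"
proof -
  have "(\<lambda>p. f (fst p, snd p)) \<in> borel_measurable (C \<Otimes>\<^sub>M LL)"
    by (rule measurable_compose[OF measurable_Pair[OF measurable_fst measurable_compose[OF measurable_snd LL_id_meas]] assms(2)])
  then have "f \<in> borel_measurable (C \<Otimes>\<^sub>M LL)" by simp
  moreover have "sets (\<mu>A \<Otimes>\<^sub>M LL) = sets (C \<Otimes>\<^sub>M LL)"
    by (rule sets_pair_measure_cong[OF assms(1) refl])
  ultimately show ?thesis by (subst measurable_cong_sets[of "\<mu>A \<Otimes>\<^sub>M LL" "C \<Otimes>\<^sub>M LL" borel borel]) auto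
qed

lemma qfun_meas:
  assumes dA: "copula_measure (d - 1) \<mu>A" and m: "markov_kernel_of d \<mu>A \<mu> K"
  shows "(\<lambda>p. qfun (K (fst p)) (snd p)) \<in> borel_measurable (\<mu>A \<Otimes>\<^sub>M LL)"
proof -
  note cb = copula_basics[OF dA]
  show ?thesis
  proof (subst borel_measurable_iff_le, intro allI)
    fix a :: real
    have [measurable]: "(\<lambda>w. measure (K (fst w)) {0..a}) \<in> borel_measurable (\<mu>A \<Otimes>\<^sub>M LL)"
    proof -
      have "(\<lambda>x. measure (K x) {0..a}) \<in> borel_measurable \<mu>A"
        by (subst measurable_cong_sets[OF cb(1) refl]) (rule kernel_slice_meas[OF m])
      then show ?thesis by (rule measurable_compose[OF measurable_fst])
    qed
    have [measurable]: "(\<lambda>w. snd w) \<in> borel_measurable (\<mu>A \<Otimes>\<^sub>M LL)"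
      by (rule measurable_compose[OF measurable_snd LL_id_meas])
    let ?S = "space (\<mu>A \<Otimes>\<^sub>M LL)"
    have key: "(qfun (K (fst w)) (snd w) \<le> a) = ((snd w = 0 \<and> 0 \<le> a) \<or> (snd w \<noteq> 0 \<and> (1 \<le> a \<or> (0 \<le> a \<and> a < 1 \<and> snd w \<le> measure (K (fst w)) {0..a}))))"
      if w: "w \<in> ?S" for w
    proof -
      from w have w1: "fst w \<in> space \<mu>A" and w2: "snd w \<in> space LL"
        by (simp_all add: space_pair_measure mem_Times_iff)
      from w1 cb(2) have x: "fst w \<in> space (cube_space (d - 1))" by simp
      from w2 have t: "snd w \<in> {0..1}" by simp
      interpret P: dP "K (fst w)" by (rule kernel_dP[OF m x])
      show ?thesis
      proof (cases "snd w = 0")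
        case True
        then show ?thesis by (simp add: P.qfun_zero)
      next
        case False
        then have t': "0 < snd w" "snd w \<le> 1" using t by auto
        show ?thesis
        proof (cases "1 \<le> a")
          case True
          then show ?thesis using P.qfun_props(2)[OF t'] False by auto
        next
          case a1: False
          show ?thesis
          proof (cases "0 \<le> a")
            case True
            then show ?thesis using P.qfun_galois[OF t' True] a1 False by (auto simp: dfun_def)
          next
            case False
            then show ?thesis using P.qfun_props(1)[OF t'] a1 by auto
          qed
        qed
      qed
    qed
    have eq: "{w \<in> ?S. qfun (K (fst w)) (snd w) \<le> a} =
      {w \<in> ?S. (snd w = 0 \<and> 0 \<le> a) \<or> (snd w \<noteq> 0 \<and> (1 \<le> a \<or> (0 \<le> a \<and> a < 1 \<and> snd w \<le> measure (K (fst w)) {0..a})))}"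
      using key by auto
    show "{w \<in> ?S. qfun (K (fst w)) (snd w) \<le> a} \<in> sets (\<mu>A \<Otimes>\<^sub>M LL)"
      unfolding eq by measurable
  qed
qed


lemma part1:
  assumes dA: "copula_measure (d - 1) \<mu>A"
    and m1: "markov_kernel_of d \<mu>A \<mu>1 K1" and m2: "markov_kernel_of d \<mu>A \<mu>2 K2"
  shows "D_A1 \<mu>A K1 K2 = (\<integral>\<tau>. norm_A1 \<mu>A (\<lambda>x. cond_quantile K1 \<tau> x - cond_quantile K2 \<tau> x) \<partial>LL)"
proof -
  note cb = copula_basics[OF dA]
  interpret pA: prob_space \<mu>A by (rule cb(3))
  interpret pp: pair_prob_space \<mu>A LL
    by (simp add: pair_prob_space_def pair_sigma_finite_def prob_LL cb(3) prob_space_imp_sigma_finite)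
  define f where "f x y = \<bar>measure (K1 x) {0..y} - measure (K2 x) {0..y}\<bar>" for x y
  define g where "g x \<tau> = \<bar>qfun (K1 x) \<tau> - qfun (K2 x) \<tau>\<bar>" for x \<tau>
  have sp: "fst p \<in> space (cube_space (d - 1))" "snd p \<in> {0..1}" if "p \<in> space (\<mu>A \<Otimes>\<^sub>M LL)" for p
    using that cb(2) by (simp_all add: space_pair_measure mem_Times_iff)
  have F1: "(\<lambda>p. measure (K1 (fst p)) {0..snd p}) \<in> borel_measurable (\<mu>A \<Otimes>\<^sub>M LL)"
    by (rule pair_meas_transfer[OF cb(1) kernel_joint_meas[OF m1]])
  have F2: "(\<lambda>p. measure (K2 (fst p)) {0..snd p}) \<in> borel_measurable (\<mu>A \<Otimes>\<^sub>M LL)"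
    by (rule pair_meas_transfer[OF cb(1) kernel_joint_meas[OF m2]])
  have Q1: "(\<lambda>p. qfun (K1 (fst p)) (snd p)) \<in> borel_measurable (\<mu>A \<Otimes>\<^sub>M LL)"
    by (rule qfun_meas[OF dA m1])
  have Q2: "(\<lambda>p. qfun (K2 (fst p)) (snd p)) \<in> borel_measurable (\<mu>A \<Otimes>\<^sub>M LL)"
    by (rule qfun_meas[OF dA m2])
  have intf: "integrable (\<mu>A \<Otimes>\<^sub>M LL) (\<lambda>(x, y). f x y)"
    unfolding case_prod_unfold
  proof (rule pp.P.integrable_const_bound[where B=1])
    show "AE p in \<mu>A \<Otimes>\<^sub>M LL. norm (f (fst p) (snd p)) \<le> 1"
    proof (rule AE_I2)
      fix p assume p: "p \<in> space (\<mu>A \<Otimes>\<^sub>M LL)"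
      interpret P1: dP "K1 (fst p)" by (rule kernel_dP[OF m1 sp(1)[OF p]])
      interpret P2: dP "K2 (fst p)" by (rule kernel_dP[OF m2 sp(1)[OF p]])
      show "norm (f (fst p) (snd p)) \<le> 1"
        using P1.dfun_nonneg[of "snd p"] P2.dfun_nonneg[of "snd p"] P1.dfun_le1[of "snd p"] P2.dfun_le1[of "snd p"]
        by (simp only: f_def dfun_def real_norm_def abs_le_iff) linarith
    qed
    show "(\<lambda>p. f (fst p) (snd p)) \<in> borel_measurable (\<mu>A \<Otimes>\<^sub>M LL)"
      unfolding f_def using F1 F2 by (intro borel_measurable_abs borel_measurable_diff)
  qed
  have intg: "integrable (\<mu>A \<Otimes>\<^sub>M LL) (\<lambda>(x, y). g x y)"
    unfolding case_prod_unfold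
  proof (rule pp.P.integrable_const_bound[where B=1])
    show "AE p in \<mu>A \<Otimes>\<^sub>M LL. norm (g (fst p) (snd p)) \<le> 1"
    proof (rule AE_I2)
      fix p assume p: "p \<in> space (\<mu>A \<Otimes>\<^sub>M LL)"
      have "qfun (K1 (fst p)) (snd p) \<in> {0..1}" "qfun (K2 (fst p)) (snd p) \<in> {0..1}"
        using qfun_range[OF kernel_dP[OF m1 sp(1)[OF p]] sp(2)[OF p]]
          qfun_range[OF kernel_dP[OF m2 sp(1)[OF p]] sp(2)[OF p]] by auto
      then show "norm (g (fst p) (snd p)) \<le> 1" by (auto simp: g_def)
    qed
    show "(\<lambda>p. g (fst p) (snd p)) \<in> borel_measurable (\<mu>A \<Otimes>\<^sub>M LL)"
      unfolding g_def using Q1 Q2 by (intro borel_measurable_abs borel_measurable_diff)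
  qed
  have pw: "(\<integral>y. f x y \<partial>LL) = (\<integral>\<tau>. g x \<tau> \<partial>LL)" if x: "x \<in> space \<mu>A" for x
  proof -
    have x': "x \<in> space (cube_space (d - 1))" using x cb(2) by simp
    show ?thesis
      using pointwise[OF kernel_dP[OF m1 x'] kernel_dP[OF m2 x']]
      by (simp add: f_def g_def dfun_def)
  qed
  have "D_A1 \<mu>A K1 K2 = (\<integral>y. (\<integral>x. f x y \<partial>\<mu>A) \<partial>LL)"
    by (simp add: D_A1_def f_def)
  also have "\<dots> = (\<integral>x. (\<integral>y. f x y \<partial>LL) \<partial>\<mu>A)"
    by (rule pp.Fubini_integral[OF intf])
  also have "\<dots> = (\<integral>x. (\<integral>\<tau>. g x \<tau> \<partial>LL) \<partial>\<mu>A)"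
    by (rule Bochner_Integration.integral_cong[OF refl]) (rule pw)
  also have "\<dots> = (\<integral>\<tau>. (\<integral>x. g x \<tau> \<partial>\<mu>A) \<partial>LL)"
    by (rule pp.Fubini_integral[OF intg, symmetric])
  also have "\<dots> = (\<integral>\<tau>. norm_A1 \<mu>A (\<lambda>x. cond_quantile K1 \<tau> x - cond_quantile K2 \<tau> x) \<partial>LL)"
    by (simp add: norm_A1_def g_def cq_eq)
  finally show ?thesis .
qed


lemma absint: "(\<integral>y. \<bar>2 * y - 1\<bar> \<partial>LL) = (1/2 :: real)"
proof -
  have "(\<integral>y. \<bar>2 * y - 1\<bar> \<partial>LL) = (\<integral>y. indicator {0..1} y *\<^sub>R \<bar>2 * y - 1\<bar> \<partial>lborel)"
    by (rule integral_restrict_space) simp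
  also have "\<dots> = (\<integral>y. indicator {0..1/2} y *\<^sub>R (1 - 2 * y) + indicator {1/2..1} y *\<^sub>R (2 * y - 1) \<partial>lborel)"
    by (rule Bochner_Integration.integral_cong[OF refl]) (auto simp: indicator_def)
  also have "\<dots> = (\<integral>y. indicator {0..1/2} y *\<^sub>R (1 - 2 * y) \<partial>lborel) + (\<integral>y. indicator {1/2..1} y *\<^sub>R (2 * y - 1) \<partial>lborel)"
  proof (rule Bochner_Integration.integral_add)
    show "integrable lborel (\<lambda>y. indicator {0..1/2} y *\<^sub>R (1 - 2 * y :: real))"
      using borel_integrable_atLeastAtMost'[of 0 "1/2" "\<lambda>y. 1 - 2 * y :: real"]
      by (simp add: set_integrable_def continuous_on_diff continuous_on_mult continuous_on_const continuous_on_id)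
    show "integrable lborel (\<lambda>y. indicator {1/2..1} y *\<^sub>R (2 * y - 1 :: real))"
      using borel_integrable_atLeastAtMost'[of "1/2" 1 "\<lambda>y. 2 * y - 1 :: real"]
      by (simp add: set_integrable_def continuous_on_diff continuous_on_mult continuous_on_const continuous_on_id)
  qed
  also have "(\<integral>y. indicator {0..1/2} y *\<^sub>R (1 - 2 * y) \<partial>lborel) = (\<lambda>y. y - y^2) (1/2) - (\<lambda>y. y - y^2) (0::real)"
    by (rule integral_FTC_atLeastAtMost)
       (auto intro!: derivative_eq_intros continuous_intros simp: has_real_derivative_iff_has_vector_derivative[symmetric])
  also have "(\<integral>y. indicator {1/2..1} y *\<^sub>R (2 * y - 1) \<partial>lborel) = (\<lambda>y. y^2 - y) 1 - (\<lambda>y. y^2 - y) (1/2::real)"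
    by (rule integral_FTC_atLeastAtMost)
       (auto intro!: derivative_eq_intros continuous_intros simp: has_real_derivative_iff_has_vector_derivative[symmetric])
  finally show ?thesis by (simp add: power2_eq_square)
qed


lemma emeasure_unif01_Icc: "0 \<le> y \<Longrightarrow> y \<le> 1 \<Longrightarrow> emeasure unif01 {0..y} = ennreal y"
  unfolding unif01_def
  by (subst emeasure_uniform_measure) (auto simp: Int_absorb1 divide_ennreal_def)

lemma kernel_mean:
  assumes dA: "copula_measure (d - 1) \<mu>A" and c: "copula_with_marginal d \<mu>A \<mu>"
    and m: "markov_kernel_of d \<mu>A \<mu> K" and y: "0 \<le> y" "y \<le> 1"
  shows "(\<integral>x. measure (K x) {0..y} \<partial>\<mu>A) = y"
proof -
  let ?C = "cube_space (d - 1)"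
  note cb = copula_basics[OF dA]
  have setsmu: "sets \<mu> = sets (?C \<Otimes>\<^sub>M borel)" using c by (simp add: copula_with_marginal_def)
  have spmu: "space \<mu> = space ?C \<times> UNIV"
    using sets_eq_imp_space_eq[OF setsmu] by (simp add: space_pair_measure)
  have snd_meas: "snd \<in> \<mu> \<rightarrow>\<^sub>M borel"
    by (subst measurable_cong_sets[OF setsmu refl]) (rule measurable_snd)
  have "emeasure \<mu> (space ?C \<times> {0..y}) = emeasure (distr \<mu> borel snd) {0..y}"
  proof -
    have "snd -` {0..y} \<inter> space \<mu> = space ?C \<times> {0..y}" using spmu by auto
    then show ?thesis by (subst emeasure_distr[OF snd_meas]) auto
  qed
  also have "\<dots> = ennreal y"
    using c y by (simp add: copula_with_marginal_def emeasure_unif01_Icc)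
  finally have e1: "emeasure \<mu> (space ?C \<times> {0..y}) = ennreal y" .
  have "emeasure \<mu> (space ?C \<times> {0..y}) = (\<integral>\<^sup>+ x. indicator (space ?C) x * emeasure (K x) {0..y} \<partial>\<mu>A)"
    using m unfolding markov_kernel_of_def by auto
  also have "\<dots> = (\<integral>\<^sup>+ x. ennreal (measure (K x) {0..y}) \<partial>\<mu>A)"
  proof (rule nn_integral_cong)
    fix x assume "x \<in> space \<mu>A"
    then have x: "x \<in> space ?C" using cb(2) by simp
    interpret P: dP "K x" by (rule kernel_dP[OF m x])
    show "indicator (space ?C) x * emeasure (K x) {0..y} = ennreal (measure (K x) {0..y})"
      using x by (simp add: P.emeasure_eq_measure)
  qed
  finally have e2: "(\<integral>\<^sup>+ x. ennreal (measure (K x) {0..y}) \<partial>\<mu>A) = ennreal y" using e1 by simp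
  have meas: "(\<lambda>x. measure (K x) {0..y}) \<in> borel_measurable \<mu>A"
    by (subst measurable_cong_sets[OF cb(1) refl]) (rule kernel_slice_meas[OF m])
  have "(\<integral>x. measure (K x) {0..y} \<partial>\<mu>A) = enn2real (\<integral>\<^sup>+ x. ennreal (measure (K x) {0..y}) \<partial>\<mu>A)"
    by (rule integral_eq_nn_integral[OF meas]) simp
  then show ?thesis using e2 y by simp
qed

lemma part2:
  assumes dA: "copula_measure (d - 1) \<mu>A"
    and c1: "copula_with_marginal d \<mu>A \<mu>1" and c2: "copula_with_marginal d \<mu>A \<mu>2"
    and m1: "markov_kernel_of d \<mu>A \<mu>1 K1" and m2: "markov_kernel_of d \<mu>A \<mu>2 K2"
  shows "D_A1 \<mu>A K1 K2 \<le> 1 / 2"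
proof -
  note cb = copula_basics[OF dA]
  interpret pA: prob_space \<mu>A by (rule cb(3))
  interpret pL: prob_space LL by (rule prob_LL)
  define g where "g y = (\<integral>x. \<bar>measure (K1 x) {0..y} - measure (K2 x) {0..y}\<bar> \<partial>\<mu>A)" for y
  have gb: "g y \<le> 1 - \<bar>2 * y - 1\<bar>" if y: "0 \<le> y" "y \<le> 1" for y
  proof -
    have M1: "(\<lambda>x. measure (K1 x) {0..y}) \<in> borel_measurable \<mu>A"
      by (subst measurable_cong_sets[OF cb(1) refl]) (rule kernel_slice_meas[OF m1])
    have M2: "(\<lambda>x. measure (K2 x) {0..y}) \<in> borel_measurable \<mu>A"
      by (subst measurable_cong_sets[OF cb(1) refl]) (rule kernel_slice_meas[OF m2])
    have bd: "0 \<le> measure (K1 x) {0..y} \<and> measure (K1 x) {0..y} \<le> 1 \<and> 0 \<le> measure (K2 x) {0..y} \<and> measure (K2 x) {0..y} \<le> 1"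
      if x: "x \<in> space \<mu>A" for x
    proof -
      have x': "x \<in> space (cube_space (d - 1))" using x cb(2) by simp
      interpret P1: dP "K1 x" by (rule kernel_dP[OF m1 x'])
      interpret P2: dP "K2 x" by (rule kernel_dP[OF m2 x'])
      show ?thesis using P1.dfun_nonneg[of y] P2.dfun_nonneg[of y] P1.dfun_le1[of y] P2.dfun_le1[of y]
        by (simp add: dfun_def)
    qed
    have I1: "integrable \<mu>A (\<lambda>x. measure (K1 x) {0..y})"
      by (rule pA.integrable_const_bound[where B=1]) (use bd M1 in auto)
    have I2: "integrable \<mu>A (\<lambda>x. measure (K2 x) {0..y})"
      by (rule pA.integrable_const_bound[where B=1]) (use bd M2 in auto)
    have E1: "(\<integral>x. measure (K1 x) {0..y} \<partial>\<mu>A) = y" by (rule kernel_mean[OF dA c1 m1 y])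
    have E2: "(\<integral>x. measure (K2 x) {0..y} \<partial>\<mu>A) = y" by (rule kernel_mean[OF dA c2 m2 y])
    have Ia: "integrable \<mu>A (\<lambda>x. \<bar>measure (K1 x) {0..y} - measure (K2 x) {0..y}\<bar>)"
      using I1 I2 by auto
    have pw1: "\<bar>measure (K1 x) {0..y} - measure (K2 x) {0..y}\<bar> \<le> measure (K1 x) {0..y} + measure (K2 x) {0..y}"
      if "x \<in> space \<mu>A" for x
      using bd[OF that] unfolding abs_le_iff by linarith
    have pw2: "\<bar>measure (K1 x) {0..y} - measure (K2 x) {0..y}\<bar> \<le> (1 - measure (K1 x) {0..y}) + (1 - measure (K2 x) {0..y})"
      if "x \<in> space \<mu>A" for x
      using bd[OF that] unfolding abs_le_iff by linarith
    have "g y \<le> (\<integral>x. measure (K1 x) {0..y} + measure (K2 x) {0..y} \<partial>\<mu>A)"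
      unfolding g_def
      by (rule integral_mono[OF Ia]) (use I1 I2 pw1 in auto)
    also have "\<dots> = 2 * y" using E1 E2 I1 I2 by simp
    finally have g1: "g y \<le> 2 * y" .
    have "g y \<le> (\<integral>x. (1 - measure (K1 x) {0..y}) + (1 - measure (K2 x) {0..y}) \<partial>\<mu>A)"
      unfolding g_def
      by (rule integral_mono[OF Ia]) (use I1 I2 pw2 in auto)
    also have "\<dots> = 2 - 2 * y"
      using E1 E2 I1 I2 by (simp add: Bochner_Integration.integral_add Bochner_Integration.integral_diff pA.prob_space)
    finally have g2: "g y \<le> 2 - 2 * y" .
    show ?thesis using g1 g2 by (cases "y \<le> 1/2") auto
  qed
  have D: "D_A1 \<mu>A K1 K2 = (\<integral>y. g y \<partial>LL)" by (simp add: D_A1_def g_def)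
  have Ih: "integrable LL (\<lambda>y. 1 - \<bar>2 * y - 1\<bar> :: real)"
    apply (rule pL.integrable_const_bound[where B=1])
     apply (rule AE_I2)
     apply (auto simp: abs_le_iff)[1]
    apply measurable
    done
  have Ih1: "(\<integral>y. 1 - \<bar>2 * y - 1\<bar> \<partial>LL) = (1/2::real)"
  proof -
    have Ia: "integrable LL (\<lambda>y. \<bar>2 * y - 1\<bar> :: real)"
      apply (rule pL.integrable_const_bound[where B=1])
     apply (rule AE_I2)
     apply (auto simp: abs_le_iff)[1]
    apply measurable
    done
    have "(\<integral>y. 1 - \<bar>2 * y - 1\<bar> \<partial>LL) = (\<integral>y. 1 \<partial>LL) - (\<integral>y. \<bar>2 * y - 1\<bar> \<partial>LL)"
      by (rule Bochner_Integration.integral_diff[OF _ Ia]) simp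
    also have "\<dots> = 1 - 1/2" using absint pL.prob_space by simp
    finally show ?thesis by simp
  qed
  show ?thesis
  proof (cases "integrable LL g")
    case True
    have "(\<integral>y. g y \<partial>LL) \<le> (\<integral>y. 1 - \<bar>2 * y - 1\<bar> \<partial>LL)"
      by (rule integral_mono[OF True Ih]) (use gb in auto)
    then show ?thesis using D Ih1 by simp
  next
    case False
    then show ?thesis using D by (simp add: not_integrable_integral_eq)
  qed
qed


lemma unif01_density: "unif01 = density lborel (\<lambda>x. ennreal (indicator {0..1} x))"
  unfolding unif01_def uniform_measure_def
  by (intro density_cong) (auto simp: indicator_def)

lemma sets_unif01[simp]: "sets unif01 = sets borel"
  by (simp add: unif01_def)

lemma space_unif01[simp]: "space unif01 = UNIV"
  by (simp add: unif01_def)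

lemma unif_LL:
  fixes f :: "real \<Rightarrow> real"
  assumes f: "f \<in> borel_measurable borel"
  shows "integral\<^sup>L unif01 f = integral\<^sup>L LL f"
proof -
  have "integral\<^sup>L unif01 f = (\<integral>x. indicator {0..1} x *\<^sub>R f x \<partial>lborel)"
    unfolding unif01_density
    by (rule integral_density) (use f in auto)
  also have "\<dots> = integral\<^sup>L LL f"
    by (rule integral_restrict_space[symmetric]) simp
  finally show ?thesis .
qed

lemma lborel_reflect: "distr lborel borel (\<lambda>t. 1 - t) = (lborel :: real measure)"
proof -
  have "lborel = distr lborel borel (\<lambda>x. 1 + (-1) * x :: real)"
    using lborel_real_affine[of "-1::real" 1] by (simp add: density_1)
  then show ?thesis by simp
qed

lemma unif01_reflect: "distr unif01 borel (\<lambda>t. 1 - t) = unif01"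
proof (rule measure_eqI)
  show "sets (distr unif01 borel (\<lambda>t. 1 - t)) = sets unif01" by simp
  fix A assume "A \<in> sets (distr unif01 borel (\<lambda>t::real. 1 - t))"
  then have A: "A \<in> sets borel" by simp
  have r: "(\<lambda>t::real. 1 - t) \<in> borel_measurable borel" by measurable
  have pre: "(\<lambda>t::real. 1 - t) -` ({0..1} \<inter> A) = {0..1} \<inter> ((\<lambda>t. 1 - t) -` A)" by auto
  have pv: "(\<lambda>t::real. 1 - t) -` A \<in> sets borel" using measurable_sets[OF r A] by simp
  have pre2: "(\<lambda>t::real. 1 - t) -` {0..1} = {0..1}" by auto
  have "emeasure lborel ({0..1} \<inter> ((\<lambda>t. 1 - t) -` A)) = emeasure (distr lborel borel (\<lambda>t::real. 1 - t)) ({0..1} \<inter> A)"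
    using A r by (subst emeasure_distr) (auto simp: pre pre2)
  also have "\<dots> = emeasure lborel ({0..1} \<inter> A)" by (simp add: lborel_reflect)
  finally have eq: "emeasure lborel ({0..1} \<inter> ((\<lambda>t. 1 - t) -` A)) = emeasure lborel ({0..1::real} \<inter> A)" .
  have "emeasure (distr unif01 borel (\<lambda>t. 1 - t)) A = emeasure unif01 ((\<lambda>t. 1 - t) -` A)"
    using A r by (subst emeasure_distr) (auto simp: measurable_cong_sets[OF sets_unif01 refl])
  also have "\<dots> = emeasure lborel ({0..1} \<inter> ((\<lambda>t. 1 - t) -` A)) / emeasure lborel {0..1::real}"
    unfolding unif01_def using A r pv by (subst emeasure_uniform_measure) auto
  also have "\<dots> = emeasure lborel ({0..1} \<inter> A) / emeasure lborel {0..1::real}" by (simp only: eq)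
  also have "\<dots> = emeasure unif01 A"
    unfolding unif01_def using A by (subst emeasure_uniform_measure) auto
  finally show "emeasure (distr unif01 borel (\<lambda>t. 1 - t)) A = emeasure unif01 A" .
qed

definition clamp01 :: "real \<Rightarrow> real" where "clamp01 t = max 0 (min 1 t)"

lemma clamp01_range: "clamp01 t \<in> {0..1}" by (simp add: clamp01_def)

lemma clamp01_meas[measurable]: "clamp01 \<in> borel_measurable borel"
  unfolding clamp01_def by measurable

lemma AE_unif01: "AE t in unif01. t \<in> {0..1}"
  unfolding unif01_def by (rule AE_uniform_measureI) auto

lemma unif01_clamp: "distr unif01 borel clamp01 = unif01"
proof -
  have "distr unif01 borel clamp01 = distr unif01 borel (\<lambda>t. t)"
    by (rule distr_cong_AE) (use AE_unif01 in \<open>auto simp: clamp01_def measurable_cong_sets[OF sets_unif01 refl]\<close>)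
  also have "\<dots> = unif01" by (rule distr_id2) simp
  finally show ?thesis .
qed

lemma unif01_clamp_reflect: "distr unif01 borel (\<lambda>t. 1 - clamp01 t) = unif01"
proof -
  have "distr unif01 borel (\<lambda>t. 1 - clamp01 t) = distr unif01 borel (\<lambda>t. 1 - t)"
    by (rule distr_cong_AE) (use AE_unif01 in \<open>auto simp: clamp01_def measurable_cong_sets[OF sets_unif01 refl]\<close>)
  also have "\<dots> = unif01" by (rule unif01_reflect)
  finally show ?thesis .
qed


lemma dirac_copula:
  assumes dA: "copula_measure (d - 1) \<mu>A"
    and hm: "h \<in> borel_measurable (cube_space (d - 1))"
    and hr: "\<And>x. h x \<in> {0..1}"
    and hd: "distr \<mu>A borel h = unif01"
  shows "copula_with_marginal d \<mu>A (distr \<mu>A (cube_space (d - 1) \<Otimes>\<^sub>M borel) (\<lambda>x. (x, h x)))"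
    and "markov_kernel_of d \<mu>A (distr \<mu>A (cube_space (d - 1) \<Otimes>\<^sub>M borel) (\<lambda>x. (x, h x))) (\<lambda>x. return borel (h x))"
proof -
  let ?C = "cube_space (d - 1)"
  let ?T = "\<lambda>x. (x, h x)"
  let ?mu = "distr \<mu>A (?C \<Otimes>\<^sub>M borel) ?T"
  note cb = copula_basics[OF dA]
  interpret pA: prob_space \<mu>A by (rule cb(3))
  have idm: "(\<lambda>x. x) \<in> \<mu>A \<rightarrow>\<^sub>M ?C" by (rule measurable_ident_sets[OF cb(1)])
  have hmA: "h \<in> \<mu>A \<rightarrow>\<^sub>M borel" by (subst measurable_cong_sets[OF cb(1) refl]) (rule hm)
  have Tm: "?T \<in> \<mu>A \<rightarrow>\<^sub>M ?C \<Otimes>\<^sub>M borel" by (rule measurable_Pair[OF idm hmA])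
  show "copula_with_marginal d \<mu>A ?mu"
    unfolding copula_with_marginal_def
  proof (intro conjI allI impI)
    show "sets ?mu = sets (?C \<Otimes>\<^sub>M borel)" by simp
    show "prob_space ?mu" by (rule pA.prob_space_distr[OF Tm])
    fix i assume i: "i < d - 1"
    have gi: "(\<lambda>(x, y). x i) \<in> ?C \<Otimes>\<^sub>M (borel :: real measure) \<rightarrow>\<^sub>M (borel :: real measure)"
    proof -
      have "(\<lambda>x. x i) \<in> ?C \<rightarrow>\<^sub>M (borel :: real measure)"
        unfolding cube_space_def using i by (intro measurable_component_singleton) auto
      then have "(\<lambda>p. fst p i) \<in> ?C \<Otimes>\<^sub>M (borel :: real measure) \<rightarrow>\<^sub>M (borel :: real measure)"
        by (rule measurable_compose[OF measurable_fst])
      then show ?thesis by (simp add: case_prod_unfold)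
    qed
    have "distr ?mu borel (\<lambda>(x, y). x i) = distr \<mu>A borel ((\<lambda>(x, y). x i) \<circ> ?T)"
      by (rule distr_distr[OF gi Tm])
    also have "\<dots> = distr \<mu>A borel (\<lambda>x. x i)" by (simp add: comp_def)
    also have "\<dots> = unif01" using dA i by (simp add: copula_measure_def)
    finally show "distr ?mu borel (\<lambda>(x, y). x i) = unif01" .
  next
    have "distr ?mu borel snd = distr \<mu>A borel (snd \<circ> ?T)"
      by (rule distr_distr[OF measurable_snd Tm])
    also have "\<dots> = unif01" using hd by (simp add: comp_def)
    finally show "distr ?mu borel snd = unif01" .
  next
    have "distr ?mu ?C fst = distr \<mu>A ?C (fst \<circ> ?T)"
      by (rule distr_distr[OF measurable_fst Tm])
    also have "\<dots> = distr \<mu>A ?C (\<lambda>x. x)" by (simp add: comp_def)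
    also have "\<dots> = \<mu>A" by (rule distr_id2[OF cb(1)[symmetric]])
    finally show "distr ?mu ?C fst = \<mu>A" .
  qed
  show "markov_kernel_of d \<mu>A ?mu (\<lambda>x. return borel (h x))"
    unfolding markov_kernel_of_def
  proof (intro conjI ballI)
    show "(\<lambda>x. return borel (h x)) \<in> ?C \<rightarrow>\<^sub>M prob_algebra borel"
      by (rule measurable_compose[OF hm measurable_return_prob_space])
    fix x assume "x \<in> space ?C"
    show "emeasure (return borel (h x)) {0..1} = 1" using hr[of x] by simp
  next
    fix B F assume B: "B \<in> sets ?C" and F: "F \<in> sets (borel :: real measure)"
    have BF: "B \<times> F \<in> sets (?C \<Otimes>\<^sub>M borel)" using B F by simp
    have S: "?T -` (B \<times> F) \<inter> space \<mu>A \<in> sets \<mu>A" by (rule measurable_sets[OF Tm BF])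
    have "emeasure ?mu (B \<times> F) = emeasure \<mu>A (?T -` (B \<times> F) \<inter> space \<mu>A)"
      by (rule emeasure_distr[OF Tm BF])
    also have "\<dots> = (\<integral>\<^sup>+ x. indicator (?T -` (B \<times> F) \<inter> space \<mu>A) x \<partial>\<mu>A)"
      by (rule nn_integral_indicator[OF S, symmetric])
    also have "\<dots> = (\<integral>\<^sup>+ x. indicator B x * emeasure (return borel (h x)) F \<partial>\<mu>A)"
      using F by (intro nn_integral_cong) (auto simp: indicator_def)
    finally show "emeasure ?mu (B \<times> F) = (\<integral>\<^sup>+ x. indicator B x * emeasure (return borel (h x)) F \<partial>\<mu>A)" .
  qed
qed


lemma cq_dirac:
  assumes "h x \<in> {0..1}" "0 < \<tau>" "\<tau> \<le> 1"
  shows "cond_quantile (\<lambda>x. return borel (h x)) \<tau> x = h x"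
proof -
  have "{y \<in> {0..1}. \<tau> \<le> measure (return borel (h x)) {0..y}} = {h x..1}"
    using assms by (auto simp: measure_return indicator_def)
  then show ?thesis using assms by (simp add: cond_quantile_def)
qed

lemma cq_zero: "cond_quantile K 0 x = 0"
proof -
  have "{y \<in> {0..1}. (0::real) \<le> measure (K x) {0..y}} = {0..1}" by auto
  then show ?thesis by (simp add: cond_quantile_def)
qed

lemma existence:
  assumes d: "d \<ge> 2" and dA: "copula_measure (d - 1) \<mu>A"
  shows "\<exists>\<mu>1 \<mu>2 K1 K2.
            copula_with_marginal d \<mu>A \<mu>1 \<and> copula_with_marginal d \<mu>A \<mu>2 \<and>
            markov_kernel_of d \<mu>A \<mu>1 K1 \<and> markov_kernel_of d \<mu>A \<mu>2 K2 \<and>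
            D_A1 \<mu>A K1 K2 = 1 / 2"
proof -
  let ?C = "cube_space (d - 1)"
  note cb = copula_basics[OF dA]
  interpret pA: prob_space \<mu>A by (rule cb(3))
  define c where "c x = clamp01 (x 0)" for x :: "nat \<Rightarrow> real"
  have x0: "(\<lambda>x. x 0) \<in> ?C \<rightarrow>\<^sub>M (borel :: real measure)"
    unfolding cube_space_def using d by (intro measurable_component_singleton) auto
  have x0A: "(\<lambda>x. x 0) \<in> \<mu>A \<rightarrow>\<^sub>M (borel :: real measure)"
    by (subst measurable_cong_sets[OF cb(1) refl]) (rule x0)
  have cm: "c \<in> borel_measurable ?C"
    unfolding c_def by (rule measurable_compose[OF x0 clamp01_meas])
  have cm': "(\<lambda>x. 1 - c x) \<in> borel_measurable ?C" using cm by measurable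
  have cA: "c \<in> borel_measurable \<mu>A"
    by (subst measurable_cong_sets[OF cb(1) refl]) (rule cm)
  have u0: "distr \<mu>A borel (\<lambda>x. x 0) = unif01" using dA d by (simp add: copula_measure_def)
  have cd: "distr \<mu>A borel c = unif01"
  proof -
    have "distr \<mu>A borel c = distr (distr \<mu>A borel (\<lambda>x. x 0)) borel clamp01"
      by (subst distr_distr[OF clamp01_meas x0A]) (simp add: comp_def c_def[abs_def])
    also have "\<dots> = unif01" by (simp add: u0 unif01_clamp)
    finally show ?thesis .
  qed
  have cd': "distr \<mu>A borel (\<lambda>x. 1 - c x) = unif01"
  proof -
    have m: "(\<lambda>t. 1 - clamp01 t) \<in> borel_measurable borel" by measurable
    have "distr \<mu>A borel (\<lambda>x. 1 - c x) = distr (distr \<mu>A borel (\<lambda>x. x 0)) borel (\<lambda>t. 1 - clamp01 t)"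
      by (subst distr_distr[OF m x0A]) (simp add: comp_def c_def)
    also have "\<dots> = unif01" by (simp add: u0 unif01_clamp_reflect)
    finally show ?thesis .
  qed
  have cr: "c x \<in> {0..1}" for x using clamp01_range[of "x 0"] by (simp add: c_def)
  have cr': "1 - c x \<in> {0..1}" for x using cr[of x] by auto
  define K1 where "K1 = (\<lambda>x. return borel (c x))"
  define K2 where "K2 = (\<lambda>x. return borel (1 - c x))"
  define \<mu>1 where "\<mu>1 = distr \<mu>A (?C \<Otimes>\<^sub>M borel) (\<lambda>x. (x, c x))"
  define \<mu>2 where "\<mu>2 = distr \<mu>A (?C \<Otimes>\<^sub>M borel) (\<lambda>x. (x, 1 - c x))"
  have C1: "copula_with_marginal d \<mu>A \<mu>1" and M1: "markov_kernel_of d \<mu>A \<mu>1 K1"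
    using dirac_copula[OF dA cm cr cd] by (simp_all add: \<mu>1_def K1_def)
  have C2: "copula_with_marginal d \<mu>A \<mu>2" and M2: "markov_kernel_of d \<mu>A \<mu>2 K2"
    using dirac_copula[OF dA cm' cr' cd'] by (simp_all add: \<mu>2_def K2_def)
  define V where "V = (\<integral>x. \<bar>c x - (1 - c x)\<bar> \<partial>\<mu>A)"
  have pt: "norm_A1 \<mu>A (\<lambda>x. cond_quantile K1 \<tau> x - cond_quantile K2 \<tau> x) = indicator {0<..1} \<tau> * V"
    if t: "\<tau> \<in> space LL" for \<tau>
  proof (cases "\<tau> = 0")
    case True
    then show ?thesis by (simp add: norm_A1_def cq_zero)
  next
    case False
    then have t': "0 < \<tau>" "\<tau> \<le> 1" using t by auto
    have "cond_quantile K1 \<tau> x = c x" for x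
      unfolding K1_def by (rule cq_dirac[where h=c, OF cr[of x] t'])
    moreover have "cond_quantile K2 \<tau> x = 1 - c x" for x
      unfolding K2_def by (rule cq_dirac[where h="\<lambda>x. 1 - c x", OF cr'[of x] t'])
    ultimately show ?thesis using t' by (simp add: norm_A1_def V_def)
  qed
  have "D_A1 \<mu>A K1 K2 = (\<integral>\<tau>. norm_A1 \<mu>A (\<lambda>x. cond_quantile K1 \<tau> x - cond_quantile K2 \<tau> x) \<partial>LL)"
    by (rule part1[OF dA M1 M2])
  also have "\<dots> = (\<integral>\<tau>. indicator {0<..1} \<tau> * V \<partial>LL)"
    by (rule Bochner_Integration.integral_cong[OF refl]) (rule pt)
  also have "\<dots> = V" using int_ind_Ioc[of 0 1] by simp
  also have "V = 1 / 2"
  proof -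
    have f: "(\<lambda>t::real. \<bar>t - (1 - t)\<bar>) \<in> borel_measurable borel" by measurable
    have "V = integral\<^sup>L (distr \<mu>A borel c) (\<lambda>t. \<bar>t - (1 - t)\<bar>)"
      unfolding V_def by (rule integral_distr[OF cA f, symmetric])
    also have "\<dots> = integral\<^sup>L LL (\<lambda>t. \<bar>t - (1 - t)\<bar>)" unfolding cd by (rule unif_LL[OF f])
    also have "\<dots> = (\<integral>y. \<bar>2 * y - 1\<bar> \<partial>LL)"
      by (rule Bochner_Integration.integral_cong[OF refl]) simp
    also have "\<dots> = 1 / 2" by (rule absint)
    finally show ?thesis .
  qed
  finally show ?thesis using C1 C2 M1 M2 by blast
qed


theorem theorem21:
  fixes d :: nat and \<mu>A :: "(nat \<Rightarrow> real) measure"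
  assumes "d \<ge> 2" and "copula_measure (d - 1) \<mu>A"
  shows "(\<forall>\<mu>1 \<mu>2 K1 K2.
            copula_with_marginal d \<mu>A \<mu>1 \<longrightarrow> copula_with_marginal d \<mu>A \<mu>2 \<longrightarrow>
            markov_kernel_of d \<mu>A \<mu>1 K1 \<longrightarrow> markov_kernel_of d \<mu>A \<mu>2 K2 \<longrightarrow>
            D_A1 \<mu>A K1 K2 =
              (\<integral>\<tau>. norm_A1 \<mu>A (\<lambda>x. cond_quantile K1 \<tau> x - cond_quantile K2 \<tau> x)
                 \<partial>(restrict_space lborel {0..1}))
            \<and> D_A1 \<mu>A K1 K2 \<le> 1 / 2)
       \<and> (\<exists>\<mu>1 \<mu>2 K1 K2.
            copula_with_marginal d \<mu>A \<mu>1 \<and> copula_with_marginal d \<mu>A \<mu>2 \<and>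
            markov_kernel_of d \<mu>A \<mu>1 K1 \<and> markov_kernel_of d \<mu>A \<mu>2 K2 \<and>
            D_A1 \<mu>A K1 K2 = 1 / 2)"
proof (intro conjI allI impI)
  fix \<mu>1 \<mu>2 K1 K2
  assume c1: "copula_with_marginal d \<mu>A \<mu>1" and c2: "copula_with_marginal d \<mu>A \<mu>2"
    and m1: "markov_kernel_of d \<mu>A \<mu>1 K1" and m2: "markov_kernel_of d \<mu>A \<mu>2 K2"
  show "D_A1 \<mu>A K1 K2 =
              (\<integral>\<tau>. norm_A1 \<mu>A (\<lambda>x. cond_quantile K1 \<tau> x - cond_quantile K2 \<tau> x)
                 \<partial>(restrict_space lborel {0..1}))"
    by (rule part1[OF assms(2) m1 m2])
  show "D_A1 \<mu>A K1 K2 \<le> 1 / 2"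
    by (rule part2[OF assms(2) c1 c2 m1 m2])
next
  show "\<exists>\<mu>1 \<mu>2 K1 K2.
            copula_with_marginal d \<mu>A \<mu>1 \<and> copula_with_marginal d \<mu>A \<mu>2 \<and>
            markov_kernel_of d \<mu>A \<mu>1 K1 \<and> markov_kernel_of d \<mu>A \<mu>2 K2 \<and>
            D_A1 \<mu>A K1 K2 = 1 / 2"
    by (rule existence[OF assms])
qed

end
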